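(* Let $\Sigma$ be an $n\times n$ Hermitian positive semidefinite matrix which is irreducible. If the argument of each non-zero off-diagonal entry of $-\Sigma$ lies in $\left(-\frac{\pi}{2^n},\frac{\pi}{2^n}\right)$, then ${\operatorname{mr}}(\Sigma)=n-1$, where \[{\operatorname{mr}}(\Sigma)=\min\{\operatorname{rank}(\hat\Sigma)\mid \Sigma=\tilde\Sigma+\hat\Sigma,\ \hat\Sigma\text{ Hermitian positive semidefinite},\ \tilde\Sigma\text{ diagonal}\}.\]
   Context: A square matrix is irreducible if it cannot be brought into block-diagonal form (with at least two diagonal blocks) by a simultaneous permutation of its rows and columns. In the definition of ${\operatorname{mr}}$ the diagonal matrix $\tilde\Sigma$ (necessarily real, since $\Sigma-\hat\Sigma$ is Hermitian) is not required to be positive semidefinite. *)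

theory Defs
  imports "HOL-Analysis.Complex_Transcendental" "Jordan_Normal_Form.DL_Rank"
begin

definition hermitian_mat :: "nat \<Rightarrow> complex mat \<Rightarrow> bool" where
  "hermitian_mat n A \<longleftrightarrow> A \<in> carrier_mat n n \<and>
     (\<forall>i<n. \<forall>j<n. A $$ (i, j) = cnj (A $$ (j, i)))"

definition psd_mat :: "nat \<Rightarrow> complex mat \<Rightarrow> bool" where
  "psd_mat n A \<longleftrightarrow> hermitian_mat n A \<and>
     (\<forall>x :: nat \<Rightarrow> complex.
        (\<Sum>i<n. \<Sum>j<n. cnj (x i) * A $$ (i, j) * x j) \<in> \<real> \<and>
        Re (\<Sum>i<n. \<Sum>j<n. cnj (x i) * A $$ (i, j) * x j) \<ge> 0)"

(* Reducible: some simultaneous permutation of rows and columns brings A into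
   block-diagonal form with at least two diagonal blocks (the first block of
   size k, 0 < k < n, the remaining blocks lumped together). *)
definition reducible_mat :: "nat \<Rightarrow> complex mat \<Rightarrow> bool" where
  "reducible_mat n A \<longleftrightarrow> (\<exists>p k. p permutes {..<n} \<and> 0 < k \<and> k < n \<and>
      (\<forall>i<n. \<forall>j<n. (i < k \<and> k \<le> j \<or> j < k \<and> k \<le> i) \<longrightarrow> A $$ (p i, p j) = 0))"

definition irreducible_mat :: "nat \<Rightarrow> complex mat \<Rightarrow> bool" where
  "irreducible_mat n A \<longleftrightarrow> A \<in> carrier_mat n n \<and> \<not> reducible_mat n A"

definition mr :: "nat \<Rightarrow> complex mat \<Rightarrow> nat" where
  "mr n S = Min {vec_space.rank n Sh | Sh. Sh \<in> carrier_mat n n \<and> psd_mat n Sh \<and>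
                                        diagonal_mat (S - Sh)}"

end

theory Submission
  imports Defs "Jordan_Normal_Form.DL_Rank_Submatrix"
begin

definition insec :: "real \<Rightarrow> complex \<Rightarrow> bool" where
  "insec \<phi> z \<longleftrightarrow> z \<noteq> 0 \<and> - \<phi> < Arg z \<and> Arg z < \<phi>"

lemma Re_Im_Arg:
  assumes "z \<noteq> 0"
  shows "Re z = cmod z * cos (Arg z)" "Im z = cmod z * sin (Arg z)"
  using assms by (simp_all add: cos_Arg sin_Arg)

lemma insec_lin:
  assumes p0: "0 < \<phi>" and p2: "\<phi> \<le> pi/2"
  shows "insec \<phi> z \<longleftrightarrow> (Im z * cos \<phi> < Re z * sin \<phi> \<and> - (Re z * sin \<phi>) < Im z * cos \<phi>)"
proof (cases "z = 0")
  case True then show ?thesis by (simp add: insec_def)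
next
  case False
  define a where "a = Arg z"
  have n: "cmod z > 0" using False by simp
  have e1: "Im z * cos \<phi> - Re z * sin \<phi> = cmod z * sin (a - \<phi>)"
    using Re_Im_Arg[OF False] by (simp add: a_def sin_diff algebra_simps)
  have e2: "Im z * cos \<phi> + Re z * sin \<phi> = cmod z * sin (a + \<phi>)"
    using Re_Im_Arg[OF False] by (simp add: a_def sin_add algebra_simps)
  have ab: "-pi < a" "a \<le> pi" using mpi_less_Arg Arg_le_pi a_def by auto
  show ?thesis
  proof
    assume "insec \<phi> z"
    then have h: "-\<phi> < a" "a < \<phi>" by (auto simp: insec_def a_def)
    have "sin (a - \<phi>) < 0"
    proof -
      have "sin (-(a-\<phi>)) > 0" by (rule sin_gt_zero) (use h p2 in auto)
      then show ?thesis using sin_minus[of "a-\<phi>"] by linarith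
    qed
    moreover have "sin (a + \<phi>) > 0" by (rule sin_gt_zero) (use h p2 in auto)
    ultimately show "Im z * cos \<phi> < Re z * sin \<phi> \<and> - (Re z * sin \<phi>) < Im z * cos \<phi>"
      using e1 e2 n by (smt (verit) mult_pos_pos mult_pos_neg)
  next
    assume h: "Im z * cos \<phi> < Re z * sin \<phi> \<and> - (Re z * sin \<phi>) < Im z * cos \<phi>"
    have s1: "sin (a - \<phi>) < 0"
      using h e1 n by (smt (verit) mult_nonneg_nonneg)
    have s2: "sin (a + \<phi>) > 0"
      using h e2 n by (smt (verit) mult_nonneg_nonpos)
    have "a < \<phi>"
    proof (rule ccontr)
      assume "\<not> a < \<phi>"
      then have "0 \<le> sin (a - \<phi>)" by (intro sin_ge_zero) (use ab p0 in auto)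
      then show False using s1 by simp
    qed
    moreover have "-\<phi> < a"
    proof (rule ccontr)
      assume "\<not> -\<phi> < a"
      then have "0 \<le> sin (-(a + \<phi>))" by (intro sin_ge_zero) (use ab p0 in auto)
      then show False using s2 sin_minus[of "a+\<phi>"] by linarith
    qed
    ultimately show "insec \<phi> z" using False by (simp add: insec_def a_def)
  qed
qed

lemma insec_add:
  assumes "0 < \<phi>" "\<phi> \<le> pi/2" "insec \<phi> a" "insec \<phi> b"
  shows "insec \<phi> (a + b)"
proof -
  have "Im a * cos \<phi> < Re a * sin \<phi> \<and> - (Re a * sin \<phi>) < Im a * cos \<phi>"
       "Im b * cos \<phi> < Re b * sin \<phi> \<and> - (Re b * sin \<phi>) < Im b * cos \<phi>"
    using assms insec_lin[OF assms(1,2)] by auto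
  then have "Im (a+b) * cos \<phi> < Re (a+b) * sin \<phi> \<and> - (Re (a+b) * sin \<phi>) < Im (a+b) * cos \<phi>"
    by (simp add: distrib_right)
  then show ?thesis using insec_lin[OF assms(1,2)] by blast
qed

lemma insec_mono: "insec \<phi> a \<Longrightarrow> \<phi> \<le> \<psi> \<Longrightarrow> insec \<psi> a"
  by (auto simp: insec_def)

lemma insec_div_real: "insec \<phi> a \<Longrightarrow> 0 < r \<Longrightarrow> insec \<phi> (a / of_real r)"
  by (auto simp: insec_def)

lemma insec_mult:
  assumes "insec \<phi> a" "insec \<psi> b" "\<phi> + \<psi> \<le> pi"
  shows "insec (\<phi> + \<psi>) (a * b)"
proof -
  have a0: "a \<noteq> 0" and b0: "b \<noteq> 0" using assms by (auto simp: insec_def)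
  have "a * b = (of_real (cmod a) * exp (\<i> * of_real (Arg a))) * (of_real (cmod b) * exp (\<i> * of_real (Arg b)))"
    using Arg_eq[OF a0] Arg_eq[OF b0] by simp
  also have "\<dots> = of_real (cmod a * cmod b) * exp (\<i> * of_real (Arg a + Arg b))"
    by (simp add: distrib_left exp_add)
  finally have ab: "a * b = of_real (cmod a * cmod b) * exp (\<i> * of_real (Arg a + Arg b))" .
  have "Arg (a * b) = Arg a + Arg b"
    by (rule Arg_unique[OF ab[symmetric]]) (use assms a0 b0 in \<open>auto simp: insec_def\<close>)
  then show ?thesis using assms a0 b0 by (auto simp: insec_def)
qed


definition QF :: "nat set \<Rightarrow> (nat \<Rightarrow> nat \<Rightarrow> complex) \<Rightarrow> (nat \<Rightarrow> complex) \<Rightarrow> complex" where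
  "QF V H x = (\<Sum>i\<in>V. \<Sum>j\<in>V. cnj (x i) * H i j * x j)"

definition psdV :: "nat set \<Rightarrow> (nat \<Rightarrow> nat \<Rightarrow> complex) \<Rightarrow> bool" where
  "psdV V H \<longleftrightarrow> (\<forall>i\<in>V. \<forall>j\<in>V. H i j = cnj (H j i)) \<and> (\<forall>x. 0 \<le> Re (QF V H x))"

lemma sum_if_const: "(\<Sum>b\<in>S. if P then f b else 0) = (if P then (\<Sum>b\<in>S. f b) else 0)"
  by auto

lemma QF_update:
  assumes "finite V" "i \<in> V"
  shows "QF V H (\<lambda>j. x j + (if j = i then t else 0)) =
    QF V H x + cnj t * (\<Sum>j\<in>V. H i j * x j) + (\<Sum>j\<in>V. cnj (x j) * H j i) * t + cnj t * H i i * t"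
proof -
  have e: "\<And>a b. cnj (x a + (if a = i then t else 0)) * H a b * (x b + (if b = i then t else 0))
     = cnj (x a) * H a b * x b + (if b = i then cnj (x a) * H a b * t else 0)
       + (if a = i then cnj t * H a b * x b else 0) + (if a = i then (if b = i then cnj t * H i i * t else 0) else 0)"
    by (simp add: algebra_simps)
  show ?thesis
    unfolding QF_def e sum.distrib
    using assms by (simp add: sum.delta sum_if_const mult.assoc sum_distrib_left sum_distrib_right cong: if_cong)
qed

lemma QF_zero[simp]: "QF V H (\<lambda>_. 0) = 0"
  by (simp add: QF_def)

lemma psd_herm: "psdV V H \<Longrightarrow> i \<in> V \<Longrightarrow> j \<in> V \<Longrightarrow> H i j = cnj (H j i)"
  unfolding psdV_def by blast

lemma psd_QF: "psdV V H \<Longrightarrow> 0 \<le> Re (QF V H x)"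
  unfolding psdV_def by blast

lemma psd_diag:
  assumes "finite V" "psdV V H" "i \<in> V"
  shows "Im (H i i) = 0" "0 \<le> Re (H i i)"
proof -
  have "H i i = cnj (H i i)" using psd_herm[OF assms(2,3,3)] .
  then have "Im (H i i) = Im (cnj (H i i))" by (rule arg_cong)
  then show "Im (H i i) = 0" by simp
  have "QF V H (\<lambda>j. 0 + (if j = i then 1 else 0)) = H i i"
    using QF_update[OF assms(1,3), of H "\<lambda>_. 0" 1] by simp
  moreover have "0 \<le> Re (QF V H (\<lambda>j. 0 + (if j = i then 1 else 0)))" by (rule psd_QF[OF assms(2)])
  ultimately show "0 \<le> Re (H i i)" by simp
qed

lemma Re_aux: fixes w t :: complex assumes t: "t = - (of_real s) * w"
  shows "Re (cnj t * w + cnj w * t + cnj t * of_real c * t) = (s * s * c - 2 * s) * ((Re w)\<^sup>2 + (Im w)\<^sup>2)"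
proof -
  define P where "P = (Re w)\<^sup>2 + (Im w)\<^sup>2"
  have wc: "cnj w * w = of_real P" unfolding P_def using complex_mult_cnj[of w] by (simp add: mult.commute)
  have 1: "cnj t * w = of_real (- (s * P))" unfolding t by (simp add: mult.assoc wc)
  have 2: "cnj w * t = of_real (- (s * P))" unfolding t by (simp add: wc mult.left_commute)
  have 3: "cnj t * of_real c * t = of_real (s * s * c * P)" unfolding t
    by (simp add: wc mult.assoc mult.left_commute)
  show ?thesis unfolding 1 2 3 P_def by (simp add: algebra_simps)
qed

lemma psd_null:
  assumes fin: "finite V" and psd: "psdV V H" and q: "QF V H x = 0" and i: "i \<in> V"
  shows "(\<Sum>j\<in>V. H i j * x j) = 0"
proof -
  define w where "w = (\<Sum>j\<in>V. H i j * x j)"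
  have cw: "(\<Sum>j\<in>V. cnj (x j) * H j i) = cnj w"
    unfolding w_def cnj_sum using psd_herm[OF psd _ i] by (intro sum.cong) auto
  define c where "c = Re (H i i)"
  have hc: "H i i = of_real c" using psd_diag[OF fin psd i] by (simp add: c_def complex_eq_iff)
  have c0: "0 \<le> c" using psd_diag[OF fin psd i] by (simp add: c_def)
  define s where "s = 1 / (c + 1)"
  have s0: "0 < s" using c0 by (simp add: s_def)
  have sc: "s * c < 1" using c0 by (simp add: s_def field_simps)
  define t where "t = - (of_real s) * w"
  have "0 \<le> Re (QF V H (\<lambda>j. x j + (if j = i then t else 0)))"
    by (rule psd_QF[OF psd])
  also have "QF V H (\<lambda>j. x j + (if j = i then t else 0)) = cnj t * w + cnj w * t + cnj t * of_real c * t"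
  proof -
    have "QF V H (\<lambda>j. x j + (if j = i then t else 0)) = QF V H x + cnj t * w + cnj w * t + cnj t * H i i * t"
      using QF_update[OF fin i, of H x t] unfolding cw w_def .
    then show ?thesis unfolding q hc by (simp only: add_0_left)
  qed
  also have "Re (cnj t * w + cnj w * t + cnj t * of_real c * t) = (s * s * c - 2 * s) * ((Re w)\<^sup>2 + (Im w)\<^sup>2)"
    by (rule Re_aux[OF t_def])
  finally have ge: "0 \<le> (s * s * c - 2 * s) * ((Re w)\<^sup>2 + (Im w)\<^sup>2)" .
  have neg: "s * s * c - 2 * s < 0"
  proof -
    have "s * (s * c) < s * 2" using sc s0 by simp
    then show ?thesis by (simp add: algebra_simps)
  qed
  have P0: "0 \<le> (Re w)\<^sup>2 + (Im w)\<^sup>2" by simp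
  have "(Re w)\<^sup>2 + (Im w)\<^sup>2 \<le> 0"
  proof (rule ccontr)
    assume "\<not> (Re w)\<^sup>2 + (Im w)\<^sup>2 \<le> 0"
    then have "(Re w)\<^sup>2 + (Im w)\<^sup>2 > 0" by simp
    then have "(s * s * c - 2 * s) * ((Re w)\<^sup>2 + (Im w)\<^sup>2) < 0" using neg by (simp add: mult_neg_pos)
    then show False using ge by simp
  qed
  then have "(Re w)\<^sup>2 + (Im w)\<^sup>2 = 0" using P0 by linarith
  then have "Re w = 0" "Im w = 0" by (simp_all add: sum_power2_eq_zero_iff)
  then have w0: "w = 0" by (simp add: complex_eq_iff)
  show ?thesis unfolding w_def[symmetric] by (rule w0)
qed


definition connV :: "nat set \<Rightarrow> (nat \<Rightarrow> nat \<Rightarrow> complex) \<Rightarrow> bool" where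
  "connV V H \<longleftrightarrow> (\<forall>A. A \<subseteq> V \<longrightarrow> A \<noteq> {} \<longrightarrow> A \<noteq> V \<longrightarrow> (\<exists>i\<in>A. \<exists>j\<in>V - A. H i j \<noteq> 0))"

definition sectorV :: "nat set \<Rightarrow> (nat \<Rightarrow> nat \<Rightarrow> complex) \<Rightarrow> real \<Rightarrow> bool" where
  "sectorV V H \<phi> \<longleftrightarrow> (\<forall>i\<in>V. \<forall>j\<in>V. i \<noteq> j \<longrightarrow> H i j \<noteq> 0 \<longrightarrow> insec \<phi> (- H i j))"

definition kerV :: "nat set \<Rightarrow> (nat \<Rightarrow> nat \<Rightarrow> complex) \<Rightarrow> (nat \<Rightarrow> complex) \<Rightarrow> bool" where
  "kerV V H z \<longleftrightarrow> (\<forall>i\<in>V. (\<Sum>j\<in>V. H i j * z j) = 0)"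

definition schur :: "(nat \<Rightarrow> nat \<Rightarrow> complex) \<Rightarrow> nat \<Rightarrow> nat \<Rightarrow> nat \<Rightarrow> complex" where
  "schur H v i j = H i j - H i v * H v j / H v v"

lemma sec_use: "sectorV V H \<phi> \<Longrightarrow> i \<in> V \<Longrightarrow> j \<in> V \<Longrightarrow> i \<noteq> j \<Longrightarrow> H i j \<noteq> 0 \<Longrightarrow> insec \<phi> (- H i j)"
  unfolding sectorV_def by blast

lemma ker_schur:
  assumes fin: "finite V" and v: "v \<in> V" and h: "H v v \<noteq> 0" and k: "kerV V H z"
  shows "kerV (V - {v}) (schur H v) z"
  unfolding kerV_def
proof
  fix i assume i: "i \<in> V - {v}"
  have "(\<Sum>j\<in>V. H i j * z j) = 0" using k i unfolding kerV_def by blast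
  then have ri: "H i v * z v + (\<Sum>j\<in>V - {v}. H i j * z j) = 0"
    using sum.remove[OF fin v, of "\<lambda>j. H i j * z j"] by simp
  have "(\<Sum>j\<in>V. H v j * z j) = 0" using k v unfolding kerV_def by blast
  then have rv: "H v v * z v + (\<Sum>j\<in>V - {v}. H v j * z j) = 0"
    using sum.remove[OF fin v, of "\<lambda>j. H v j * z j"] by simp
  have "(\<Sum>j\<in>V - {v}. schur H v i j * z j)
      = (\<Sum>j\<in>V - {v}. H i j * z j) - H i v / H v v * (\<Sum>j\<in>V - {v}. H v j * z j)"
    unfolding schur_def by (simp add: left_diff_distrib sum_subtractf sum_distrib_left mult.assoc)
  also have "\<dots> = - (H i v * z v) - H i v / H v v * (- (H v v * z v))"
  proof -
    have a1: "(\<Sum>j\<in>V - {v}. H i j * z j) = - (H i v * z v)" using ri by (simp add: add_eq_0_iff)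
    have a2: "(\<Sum>j\<in>V - {v}. H v j * z j) = - (H v v * z v)" using rv by (simp add: add_eq_0_iff)
    show ?thesis unfolding a1 a2 ..
  qed
  also have "\<dots> = 0" using h by (simp add: field_simps)
  finally show "(\<Sum>j\<in>V - {v}. schur H v i j * z j) = 0" .
qed

lemma insec_schur:
  assumes sec: "sectorV V H \<theta>" and t0: "0 < \<theta>" and t2: "2 * \<theta> \<le> pi / 2"
    and v: "v \<in> V" and r: "0 < r" and h: "H v v = of_real r"
    and i: "i \<in> V - {v}" and j: "j \<in> V - {v}" and ij: "i \<noteq> j"
    and nz: "H i j \<noteq> 0 \<or> (H i v \<noteq> 0 \<and> H v j \<noteq> 0)"
  shows "insec (2 * \<theta>) (- schur H v i j)"
proof -
  have e: "- schur H v i j = (- H i j) + ((- H i v) * (- H v j)) / of_real r"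
    unfolding schur_def h by simp
  have p: "0 < 2 * \<theta>" using t0 by simp
  have A: "H i j \<noteq> 0 \<Longrightarrow> insec (2 * \<theta>) (- H i j)"
  proof -
    assume a: "H i j \<noteq> 0"
    have "insec \<theta> (- H i j)" using sec_use[OF sec _ _ ij a] i j by blast
    then show ?thesis by (rule insec_mono) (use t0 in auto)
  qed
  have B: "H i v \<noteq> 0 \<Longrightarrow> H v j \<noteq> 0 \<Longrightarrow> insec (2 * \<theta>) (((- H i v) * (- H v j)) / of_real r)"
  proof -
    assume a: "H i v \<noteq> 0" "H v j \<noteq> 0"
    have "insec \<theta> (- H i v)" "insec \<theta> (- H v j)"
      using sec_use[OF sec _ _ _ a(1)] sec_use[OF sec _ _ _ a(2)] i j v by auto
    then have "insec (\<theta> + \<theta>) ((- H i v) * (- H v j))"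
      by (rule insec_mult) (use t2 t0 in \<open>simp\<close>)
    then have "insec (2 * \<theta>) ((- H i v) * (- H v j))" by (simp only: mult_2)
    then show ?thesis by (rule insec_div_real[OF _ r])
  qed
  show ?thesis
  proof (cases "H i j \<noteq> 0")
    case True
    show ?thesis
    proof (cases "H i v \<noteq> 0 \<and> H v j \<noteq> 0")
      case True2: True
      show ?thesis unfolding e by (rule insec_add[OF p t2 A[OF True] B]) (use True2 in auto)
    next
      case False
      then have z0: "((- H i v) * (- H v j)) / of_real r = 0" by auto
      show ?thesis unfolding e z0 add_0_right by (rule A[OF True])
    qed
  next
    case False
    then have z: "- H i j = 0" and nz2: "H i v \<noteq> 0" "H v j \<noteq> 0" using nz by auto
    show ?thesis unfolding e z add_0_left by (rule B[OF nz2])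
  qed
qed

lemma schur_nz_cases:
  "schur H v i j \<noteq> 0 \<Longrightarrow> H i j \<noteq> 0 \<or> (H i v \<noteq> 0 \<and> H v j \<noteq> 0)"
  unfolding schur_def by auto

lemma sector_schur:
  assumes sec: "sectorV V H \<theta>" and t0: "0 < \<theta>" and t2: "2 * \<theta> \<le> pi / 2"
    and v: "v \<in> V" and r: "0 < r" and h: "H v v = of_real r"
  shows "sectorV (V - {v}) (schur H v) (2 * \<theta>)"
  unfolding sectorV_def
  using insec_schur[OF sec t0 t2 v r h] schur_nz_cases by blast

lemma schur_nz:
  assumes sec: "sectorV V H \<theta>" and t0: "0 < \<theta>" and t2: "2 * \<theta> \<le> pi / 2"
    and v: "v \<in> V" and r: "0 < r" and h: "H v v = of_real r"
    and i: "i \<in> V - {v}" and j: "j \<in> V - {v}" and ij: "i \<noteq> j"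
    and nz: "H i j \<noteq> 0 \<or> (H i v \<noteq> 0 \<and> H v j \<noteq> 0)"
  shows "schur H v i j \<noteq> 0"
  using insec_schur[OF assms] by (auto simp: insec_def)

lemma conn_schur:
  assumes sec: "sectorV V H \<theta>" and t0: "0 < \<theta>" and t2: "2 * \<theta> \<le> pi / 2"
    and v: "v \<in> V" and r: "0 < r" and h: "H v v = of_real r" and conn: "connV V H"
  shows "connV (V - {v}) (schur H v)"
  unfolding connV_def
proof (intro allI impI)
  fix A assume A1: "A \<subseteq> V - {v}" and A2: "A \<noteq> {}" and A3: "A \<noteq> V - {v}"
  note nzs = schur_nz[OF sec t0 t2 v r h]
  have "A \<subseteq> V" "A \<noteq> V" using A1 v by auto
  then obtain i j where i: "i \<in> A" and j: "j \<in> V - A" and hij: "H i j \<noteq> 0"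
    using conn A2 unfolding connV_def by blast
  show "\<exists>i\<in>A. \<exists>j\<in>V - {v} - A. schur H v i j \<noteq> 0"
  proof (cases "j = v")
    case False
    then show ?thesis using i j hij A1 nzs[of i j] by blast
  next
    case True
    then have hiv: "H i v \<noteq> 0" using hij by simp
    have "insert v A \<subseteq> V" "insert v A \<noteq> {}" "insert v A \<noteq> V" using A1 A3 v by auto
    then obtain i' j' where i': "i' \<in> insert v A" and j': "j' \<in> V - insert v A" and hij': "H i' j' \<noteq> 0"
      using conn unfolding connV_def by blast
    show ?thesis
    proof (cases "i' = v")
      case True
      then have "H v j' \<noteq> 0" using hij' by simp
      then have "schur H v i j' \<noteq> 0" using nzs[of i j'] i j' A1 hiv by auto
      then show ?thesis using i j' by blast
    next
      case False
      then have "i' \<in> A" using i' by simp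
      then show ?thesis using j' hij' nzs[of i' j'] A1 by blast
    qed
  qed
qed


lemma alg_aux:
  fixes R a ca t ct :: complex
  assumes "R \<noteq> 0" "t = - a / R" "ct = - ca / R"
  shows "ct * a + ca * t + ct * R * t = - (ca * a / R)"
  unfolding assms(2,3) using assms(1) by (simp add: field_simps)

lemma psd_schur:
  assumes fin: "finite V" and psd: "psdV V H" and v: "v \<in> V" and r: "0 < r" and h: "H v v = of_real r"
  shows "psdV (V - {v}) (schur H v)"
  unfolding psdV_def
proof (intro conjI ballI allI)
  fix i j assume i: "i \<in> V - {v}" and j: "j \<in> V - {v}"
  have e1: "cnj (H j i) = H i j" using psd_herm[OF psd, of i j] i j by simp
  have e2: "cnj (H j v) = H v j" using psd_herm[OF psd, of v j] v j by simp
  have e3: "cnj (H v i) = H i v" using psd_herm[OF psd, of i v] v i by simp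
  have e4: "cnj (H v v) = H v v" unfolding h by simp
  show "schur H v i j = cnj (schur H v j i)"
    unfolding schur_def complex_cnj_diff complex_cnj_mult complex_cnj_divide e1 e2 e3 e4
    by (simp add: mult.commute)
next
  fix x :: "nat \<Rightarrow> complex"
  define W where "W = V - {v}"
  have finW: "finite W" using fin by (simp add: W_def)
  have vW: "v \<notin> W" by (simp add: W_def)
  have VW: "V = insert v W" using v by (auto simp: W_def)
  define x' where "x' = (\<lambda>j. if j = v then 0 else x j)"
  define a where "a = (\<Sum>j\<in>W. H v j * x j)"
  define hh where "hh = H v v"
  have hh0: "hh \<noteq> 0" using r by (simp add: hh_def h)
  have hhc: "cnj hh = hh" by (simp add: hh_def h)
  have F1: "(\<Sum>j\<in>V. H v j * x' j) = a"
    unfolding VW a_def using finW vW by (simp add: x'_def, intro sum.cong) auto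
  have F2: "(\<Sum>j\<in>V. cnj (x' j) * H j v) = cnj a"
  proof -
    have "(\<Sum>j\<in>V. cnj (x' j) * H j v) = (\<Sum>j\<in>W. cnj (x j) * H j v)"
      unfolding VW using finW vW by (simp add: x'_def, intro sum.cong) auto
    also have "\<dots> = (\<Sum>j\<in>W. cnj (H v j * x j))"
    proof (rule sum.cong)
      fix j assume "j \<in> W"
      then have "H j v = cnj (H v j)" using psd_herm[OF psd, of j v] v by (simp add: W_def)
      then show "cnj (x j) * H j v = cnj (H v j * x j)" by simp
    qed simp
    finally show ?thesis unfolding a_def cnj_sum .
  qed
  have F3: "QF V H x' = QF W H x"
  proof -
    have "QF V H x' = (\<Sum>i\<in>W. \<Sum>j\<in>V. cnj (x' i) * H i j * x' j)"
      unfolding QF_def VW using finW vW by (simp add: x'_def)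
    also have "\<dots> = (\<Sum>i\<in>W. \<Sum>j\<in>W. cnj (x i) * H i j * x j)"
    proof (rule sum.cong)
      fix i assume i: "i \<in> W"
      then have xi: "x' i = x i" using vW by (auto simp: x'_def)
      have "(\<Sum>j\<in>V. cnj (x' i) * H i j * x' j) = (\<Sum>j\<in>W. cnj (x' i) * H i j * x' j)"
        unfolding VW using finW vW by (simp add: x'_def)
      also have "\<dots> = (\<Sum>j\<in>W. cnj (x i) * H i j * x j)"
        using vW xi by (intro sum.cong) (auto simp: x'_def)
      finally show "(\<Sum>j\<in>V. cnj (x' i) * H i j * x' j) = (\<Sum>j\<in>W. cnj (x i) * H i j * x j)" .
    qed simp
    finally show ?thesis unfolding QF_def .
  qed
  have F4: "QF W (schur H v) x = QF W H x - cnj a * a / hh"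
  proof -
    have ca: "(\<Sum>i\<in>W. cnj (x i) * H i v) = cnj a"
    proof -
      have "(\<Sum>i\<in>W. cnj (x i) * H i v) = (\<Sum>i\<in>W. cnj (H v i * x i))"
      proof (rule sum.cong)
        fix j assume "j \<in> W"
        then have "H j v = cnj (H v j)" using psd_herm[OF psd, of j v] v by (simp add: W_def)
        then show "cnj (x j) * H j v = cnj (H v j * x j)" by simp
      qed simp
      then show ?thesis unfolding a_def cnj_sum .
    qed
    have "QF W (schur H v) x = (\<Sum>i\<in>W. \<Sum>j\<in>W. cnj (x i) * H i j * x j - (cnj (x i) * H i v) * (H v j * x j) / hh)"
      unfolding QF_def schur_def hh_def by (intro sum.cong refl) (simp add: algebra_simps)
    also have "\<dots> = QF W H x - (\<Sum>i\<in>W. \<Sum>j\<in>W. (cnj (x i) * H i v) * (H v j * x j)) / hh"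
      unfolding QF_def by (simp add: sum_subtractf sum_divide_distrib)
    also have "(\<Sum>i\<in>W. \<Sum>j\<in>W. (cnj (x i) * H i v) * (H v j * x j)) = cnj a * a"
      unfolding sum_product[symmetric] ca a_def ..
    finally show ?thesis .
  qed
  define t where "t = - a / hh"
  have ct: "cnj t = - cnj a / hh" unfolding t_def using hhc by simp
  have "QF V H (\<lambda>j. x' j + (if j = v then t else 0)) = QF V H x' + cnj t * a + cnj a * t + cnj t * hh * t"
    using QF_update[OF fin v, of H x' t] unfolding F1 F2 hh_def .
  also have "\<dots> = QF V H x' - cnj a * a / hh"
    using alg_aux[OF hh0 t_def ct] by (simp add: add.assoc)
  finally have "QF W (schur H v) x = QF V H (\<lambda>j. x' j + (if j = v then t else 0))"
    unfolding F4 F3 by simp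
  then show "0 \<le> Re (QF (V - {v}) (schur H v) x)"
    using psd_QF[OF psd] unfolding W_def by simp
qed


lemma diag_pos:
  assumes fin: "finite V" and psd: "psdV V H" and conn: "connV V H" and v: "v \<in> V" and V2: "V \<noteq> {v}"
  shows "0 < Re (H v v)"
proof (rule ccontr)
  assume "\<not> 0 < Re (H v v)"
  then have "Re (H v v) = 0" using psd_diag[OF fin psd v] by linarith
  then have h0: "H v v = 0" using psd_diag[OF fin psd v] by (simp add: complex_eq_iff)
  have "QF V H (\<lambda>j. 0 + (if j = v then 1 else 0)) = H v v"
    using QF_update[OF fin v, of H "\<lambda>_. 0" 1] by simp
  then have q0: "QF V H (\<lambda>j. 0 + (if j = v then 1 else 0)) = 0" using h0 by simp
  have col: "H i v = 0" if i: "i \<in> V" for i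
  proof -
    have "(\<Sum>j\<in>V. H i j * (0 + (if j = v then 1 else 0))) = 0"
      by (rule psd_null[OF fin psd q0 i])
    then show ?thesis using fin v by (simp add: if_distrib cong: if_cong)
  qed
  have "{v} \<subseteq> V" "{v} \<noteq> {}" "{v} \<noteq> V" using v V2 by auto
  then obtain i j where "i \<in> {v}" "j \<in> V - {v}" "H i j \<noteq> 0"
    using conn unfolding connV_def by blast
  then have "H v j \<noteq> 0" "j \<in> V" by auto
  moreover have "H v j = cnj (H j v)" using psd_herm[OF psd v \<open>j \<in> V\<close>] .
  ultimately show False using col[OF \<open>j \<in> V\<close>] by simp
qed

lemma kernel_main:
  "finite V \<Longrightarrow> card V = n \<Longrightarrow> psdV V H \<Longrightarrow> connV V H \<Longrightarrow> sectorV V H \<theta> \<Longrightarrow> 0 < \<theta> \<Longrightarrow>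
   \<theta> \<le> pi / 2 ^ n \<Longrightarrow> kerV V H z \<Longrightarrow> k \<in> V \<Longrightarrow> z k = 0 \<Longrightarrow> \<forall>j\<in>V. z j = 0"
proof (induction n arbitrary: V H \<theta>)
  case 0
  then show ?case by auto
next
  case (Suc m)
  note fin = Suc.prems(1) and cV = Suc.prems(2) and psd = Suc.prems(3) and conn = Suc.prems(4)
    and sec = Suc.prems(5) and t0 = Suc.prems(6) and tb = Suc.prems(7) and ker = Suc.prems(8)
    and k = Suc.prems(9) and zk = Suc.prems(10)
  show ?case
  proof (cases "m = 0")
    case True
    then have "card V = 1" using cV by simp
    then obtain a where "V = {a}" by (rule card_1_singletonE)
    then show ?thesis using k zk by simp
  next
    case False
    have "card (V - {k}) = m" using cV k fin by simp
    then have "V - {k} \<noteq> {}" using False by (metis card.empty)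
    then obtain v where v: "v \<in> V" and vk: "v \<noteq> k" by blast
    have V2: "V \<noteq> {v}" using k vk by auto
    define r where "r = Re (H v v)"
    have r0: "0 < r" unfolding r_def by (rule diag_pos[OF fin psd conn v V2])
    have h: "H v v = of_real r" using psd_diag[OF fin psd v] by (simp add: r_def complex_eq_iff)
    have pm: "pi / 2 ^ m \<le> pi / 2"
    proof -
      have "(2::real) ^ 1 \<le> 2 ^ m" using False by (intro power_increasing) auto
      then show ?thesis by (intro divide_left_mono) auto
    qed
    have t2m: "2 * \<theta> \<le> pi / 2 ^ m" using tb by (simp add: field_simps)
    have t2: "2 * \<theta> \<le> pi / 2" using t2m pm by linarith
    have IH: "\<forall>j\<in>V - {v}. z j = 0"
    proof (rule Suc.IH)
      show "finite (V - {v})" using fin by simp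
      show "card (V - {v}) = m" using cV v fin by simp
      show "psdV (V - {v}) (schur H v)" by (rule psd_schur[OF fin psd v r0 h])
      show "connV (V - {v}) (schur H v)" by (rule conn_schur[OF sec t0 t2 v r0 h conn])
      show "sectorV (V - {v}) (schur H v) (2 * \<theta>)" by (rule sector_schur[OF sec t0 t2 v r0 h])
      show "0 < 2 * \<theta>" using t0 by simp
      show "2 * \<theta> \<le> pi / 2 ^ m" by (rule t2m)
      show "kerV (V - {v}) (schur H v) z" by (rule ker_schur[OF fin v _ ker]) (use r0 h in simp)
      show "k \<in> V - {v}" using k vk by simp
      show "z k = 0" by (rule zk)
    qed
    have "(\<Sum>j\<in>V. H v j * z j) = 0" using ker v unfolding kerV_def by blast
    then have "H v v * z v + (\<Sum>j\<in>V - {v}. H v j * z j) = 0"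
      using sum.remove[OF fin v, of "\<lambda>j. H v j * z j"] by simp
    moreover have "(\<Sum>j\<in>V - {v}. H v j * z j) = 0" using IH by simp
    ultimately have "H v v * z v = 0" by simp
    then have "z v = 0" using h r0 by simp
    then show ?thesis using IH by blast
  qed
qed


definition Hm :: "complex mat \<Rightarrow> nat \<Rightarrow> nat \<Rightarrow> complex" where
  "Hm A i j = A $$ (i, j)"

lemma QF_shift:
  assumes herm: "\<forall>i\<in>V. \<forall>j\<in>V. H i j = cnj (H j i)" and k: "kerV V H z"
  shows "QF V H (\<lambda>j. u j + t * z j) = QF V H u"
proof -
  have r0: "(\<Sum>j\<in>V. H i j * z j) = 0" if "i \<in> V" for i using k that unfolding kerV_def by blast
  have c0: "(\<Sum>i\<in>V. cnj (z i) * H i j) = 0" if j: "j \<in> V" for j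
  proof -
    have "(\<Sum>i\<in>V. cnj (z i) * H i j) = (\<Sum>i\<in>V. cnj (H j i * z i))"
    proof (rule sum.cong)
      fix i assume "i \<in> V"
      then have "H i j = cnj (H j i)" using herm j by blast
      then show "cnj (z i) * H i j = cnj (H j i * z i)" by simp
    qed simp
    also have "\<dots> = cnj (\<Sum>i\<in>V. H j i * z i)" by (simp add: cnj_sum)
    also have "\<dots> = 0" using r0[OF j] by simp
    finally show ?thesis .
  qed
  have "QF V H (\<lambda>j. u j + t * z j) =
     (\<Sum>i\<in>V. \<Sum>j\<in>V. cnj (u i) * H i j * u j + (cnj t * (cnj (z i) * H i j)) * u j
        + (cnj (u i + t * z i) * t) * (H i j * z j))"
    unfolding QF_def by (intro sum.cong refl) (simp add: algebra_simps)
  also have "\<dots> = QF V H u + (\<Sum>i\<in>V. \<Sum>j\<in>V. (cnj t * (cnj (z i) * H i j)) * u j)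
        + (\<Sum>i\<in>V. (cnj (u i + t * z i) * t) * (\<Sum>j\<in>V. H i j * z j))"
    unfolding QF_def by (simp add: sum.distrib sum_distrib_left)
  also have "(\<Sum>i\<in>V. (cnj (u i + t * z i) * t) * (\<Sum>j\<in>V. H i j * z j)) = 0"
    using r0 by simp
  also have "(\<Sum>i\<in>V. \<Sum>j\<in>V. (cnj t * (cnj (z i) * H i j)) * u j)
      = (\<Sum>j\<in>V. (cnj t * (\<Sum>i\<in>V. cnj (z i) * H i j)) * u j)"
    by (subst sum.swap) (simp add: sum_distrib_left sum_distrib_right)
  also have "\<dots> = 0" using c0 by simp
  finally show ?thesis by simp
qed

lemma conn_cong:
  assumes "\<forall>i\<in>V. \<forall>j\<in>V. i \<noteq> j \<longrightarrow> H i j = G i j" and "connV V H"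
  shows "connV V G"
  unfolding connV_def
proof (intro allI impI)
  fix A assume "A \<subseteq> V" "A \<noteq> {}" "A \<noteq> V"
  then obtain i j where "i \<in> A" "j \<in> V - A" "H i j \<noteq> 0" using assms(2) unfolding connV_def by blast
  moreover then have "i \<noteq> j" "i \<in> V" "j \<in> V" using \<open>A \<subseteq> V\<close> by auto
  ultimately show "\<exists>i\<in>A. \<exists>j\<in>V - A. G i j \<noteq> 0" using assms(1) by metis
qed

lemma sector_cong:
  assumes "\<forall>i\<in>V. \<forall>j\<in>V. i \<noteq> j \<longrightarrow> H i j = G i j" and "sectorV V H \<phi>"
  shows "sectorV V G \<phi>"
  using assms unfolding sectorV_def by metis

lemma psd_bridge:
  assumes "psd_mat n A"
  shows "psdV {..<n} (Hm A)"
proof -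
  have h: "\<forall>i<n. \<forall>j<n. A $$ (i, j) = cnj (A $$ (j, i))" using assms unfolding psd_mat_def hermitian_mat_def by blast
  have q: "\<forall>x. 0 \<le> Re (QF {..<n} (Hm A) x)" using assms unfolding psd_mat_def QF_def Hm_def by blast
  show ?thesis unfolding psdV_def using q h unfolding Hm_def lessThan_iff by blast
qed

lemma psd_real:
  assumes "psd_mat n A"
  shows "QF {..<n} (Hm A) x \<in> \<real>"
  using assms unfolding psd_mat_def QF_def Hm_def by blast

lemma pick_lessThan: "i < m \<Longrightarrow> pick {..<m} i = i"
proof (induction i)
  case 0
  then show ?case by (auto intro: Least_equality)
next
  case (Suc i)
  then have "pick {..<m} i = i" by simp
  then show ?case using Suc.prems by (auto intro: Least_equality)
qed

lemma irred_conn: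
  assumes car: "S \<in> carrier_mat n n" and herm: "\<forall>i<n. \<forall>j<n. S $$ (i, j) = cnj (S $$ (j, i))"
    and irr: "\<not> reducible_mat n S"
  shows "connV {..<n} (Hm S)"
  unfolding connV_def
proof (intro allI impI, rule ccontr)
  fix A assume A1: "A \<subseteq> {..<n}" and A2: "A \<noteq> {}" and A3: "A \<noteq> {..<n}"
    and ne: "\<not> (\<exists>i\<in>A. \<exists>j\<in>{..<n} - A. Hm S i j \<noteq> 0)"
  define B where "B = {..<n} - A"
  define k where "k = card A"
  have finA: "finite A" using A1 finite_subset by blast
  have k0: "0 < k" using finA A2 by (simp add: k_def card_gt_0_iff)
  have kn: "k < n" using A1 A3 unfolding k_def by (metis card_lessThan card_seteq finite_lessThan not_le)
  have cB: "card B = n - k" unfolding B_def k_def using A1 by (simp add: card_Diff_subset finA)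
  obtain f where f: "bij_betw f {..<k} A"
    using bij_betw_iff_card[of "{..<k}" A] finA by (auto simp: k_def)
  obtain g where g: "bij_betw g {k..<n} B"
    using bij_betw_iff_card[of "{k..<n}" B] cB by (auto simp: B_def)
  define p where "p i = (if i < k then f i else if i < n then g i else i)" for i
  have p1: "bij_betw p {..<k} A" using f by (rule bij_betw_cong[THEN iffD1, rotated]) (auto simp: p_def)
  have p2: "bij_betw p {k..<n} B" using g by (rule bij_betw_cong[THEN iffD1, rotated]) (auto simp: p_def)
  have "bij_betw p ({..<k} \<union> {k..<n}) (A \<union> B)"
    by (rule bij_betw_combine[OF p1 p2]) (auto simp: B_def)
  moreover have "{..<k} \<union> {k..<n} = {..<n}" using kn by auto
  moreover have "A \<union> B = {..<n}" using A1 by (auto simp: B_def)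
  ultimately have "bij_betw p {..<n} {..<n}" by simp
  then have pp: "p permutes {..<n}" by (rule bij_imp_permutes) (use kn in \<open>auto simp: p_def\<close>)
  have pA: "i < k \<Longrightarrow> p i \<in> A" for i using p1 by (auto simp: bij_betw_def)
  have pB: "k \<le> i \<Longrightarrow> i < n \<Longrightarrow> p i \<in> B" for i using p2 by (auto simp: bij_betw_def)
  have zero: "S $$ (a, b) = 0" if "a \<in> A" "b \<in> B" for a b
    using ne that by (auto simp: Hm_def B_def)
  have "reducible_mat n S"
    unfolding reducible_mat_def
  proof (intro exI conjI allI impI)
    show "p permutes {..<n}" by (rule pp)
    show "0 < k" "k < n" by (rule k0, rule kn)
    fix i j assume i: "i < n" and j: "j < n" and c: "i < k \<and> k \<le> j \<or> j < k \<and> k \<le> i"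
    show "S $$ (p i, p j) = 0"
    proof (cases "i < k \<and> k \<le> j")
      case True
      then show ?thesis using zero pA pB j by blast
    next
      case False
      then have "j < k" "k \<le> i" using c by auto
      then have "p j \<in> A" "p i \<in> B" using pA pB i by auto
      moreover have "p i < n" "p j < n" using \<open>p i \<in> B\<close> \<open>p j \<in> A\<close> A1 by (auto simp: B_def)
      ultimately show ?thesis using herm zero by (metis complex_cnj_zero)
    qed
  qed
  then show False using irr by simp
qed


lemma kern_prop:
  fixes n :: nat and S Sh :: "complex mat"
  assumes car: "S \<in> carrier_mat n n"
    and psdS: "psd_mat n S"
    and irr: "irreducible_mat n S"
    and arg: "\<forall>i<n. \<forall>j<n. i \<noteq> j \<and> S $$ (i, j) \<noteq> 0 \<longrightarrow>
           - (pi / 2 ^ n) < Arg (- S $$ (i, j)) \<and> Arg (- S $$ (i, j)) < pi / 2 ^ n"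
    and carh: "Sh \<in> carrier_mat n n" and psdh: "psd_mat n Sh" and diag: "diagonal_mat (S - Sh)"
    and ker: "kerV {..<n} (Hm Sh) z" and k: "k < n" and zk: "z k = 0"
  shows "\<forall>j<n. z j = 0"
proof -
  have off: "\<forall>i\<in>{..<n}. \<forall>j\<in>{..<n}. i \<noteq> j \<longrightarrow> Hm S i j = Hm Sh i j"
  proof (intro ballI impI)
    fix i j assume i: "i \<in> {..<n}" and j: "j \<in> {..<n}" and ij: "i \<noteq> j"
    have "(S - Sh) $$ (i, j) = 0" using diag i j ij carh unfolding diagonal_mat_def by auto
    moreover have "(S - Sh) $$ (i, j) = S $$ (i, j) - Sh $$ (i, j)" using i j carh by auto
    ultimately show "Hm S i j = Hm Sh i j" by (simp add: Hm_def)
  qed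
  have herm: "\<forall>i<n. \<forall>j<n. S $$ (i, j) = cnj (S $$ (j, i))"
    using psdS unfolding psd_mat_def hermitian_mat_def by blast
  have connS: "connV {..<n} (Hm S)"
    by (rule irred_conn[OF car herm]) (use irr in \<open>simp add: irreducible_mat_def\<close>)
  have secS: "sectorV {..<n} (Hm S) (pi / 2 ^ n)"
    unfolding sectorV_def insec_def Hm_def using arg by auto
  show ?thesis
    using kernel_main[OF _ _ psd_bridge[OF psdh] conn_cong[OF off connS] sector_cong[OF off secS] _ _ ker _ zk] k
    by auto
qed


lemma mult_vec_sum:
  assumes "A \<in> carrier_mat n n" "w \<in> carrier_vec n" "i < n"
  shows "(A *\<^sub>v w) $ i = (\<Sum>j<n. A $$ (i, j) * w $ j)"
  using assms by (simp add: scalar_prod_def atLeast0LessThan)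

lemma rank_lower:
  fixes Sh :: "complex mat"
  assumes carh: "Sh \<in> carrier_mat n n" and psdh: "psd_mat n Sh"
    and kp: "\<And>z. kerV {..<n} (Hm Sh) z \<Longrightarrow> z (n - 1) = 0 \<Longrightarrow> \<forall>j<n. z j = 0"
    and n0: "0 < n"
  shows "n - 1 \<le> vec_space.rank n Sh"
proof -
  define m where "m = n - 1"
  have nm: "n = Suc m" using n0 by (simp add: m_def)
  define I where "I = {..<m}"
  have cI: "card {j. j < n \<and> j \<in> I} = m"
  proof -
    have "{j. j < n \<and> j \<in> I} = {..<m}" by (auto simp: I_def nm)
    then show ?thesis by simp
  qed
  define B where "B = submatrix Sh I I"
  have cB: "B \<in> carrier_mat m m" using carh cI unfolding B_def by (auto simp: dim_submatrix)
  have Bij: "B $$ (i, j) = Sh $$ (i, j)" if "i < m" "j < m" for i j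
  proof -
    have "B $$ (i, j) = Sh $$ (pick I i, pick I j)"
      unfolding B_def by (rule submatrix_index) (use that carh cI in auto)
    then show ?thesis using that by (simp add: I_def pick_lessThan)
  qed
  have "det B \<noteq> 0"
  proof
    assume "det B = 0"
    then obtain w where w: "w \<in> carrier_vec m" "w \<noteq> 0\<^sub>v m" "B *\<^sub>v w = 0\<^sub>v m"
      using det_0_iff_vec_prod_zero_field[OF cB] by blast
    have Bw: "(\<Sum>j<m. Sh $$ (i, j) * w $ j) = 0" if i: "i < m" for i
    proof -
      have "(B *\<^sub>v w) $ i = 0" using w(3) i by simp
      moreover have "(B *\<^sub>v w) $ i = (\<Sum>j<m. B $$ (i, j) * w $ j)" by (rule mult_vec_sum[OF cB w(1) i])
      moreover have "(\<Sum>j<m. B $$ (i, j) * w $ j) = (\<Sum>j<m. Sh $$ (i, j) * w $ j)"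
        using Bij i by simp
      ultimately show ?thesis by simp
    qed
    define z where "z j = (if j < m then w $ j else 0)" for j
    have zm: "z m = 0" by (simp add: z_def)
    have "QF {..<n} (Hm Sh) z = (\<Sum>i<m. \<Sum>j<m. cnj (z i) * Hm Sh i j * z j)"
      unfolding QF_def nm by (simp add: zm)
    also have "\<dots> = (\<Sum>i<m. cnj (w $ i) * (\<Sum>j<m. Sh $$ (i, j) * w $ j))"
      by (intro sum.cong refl) (simp add: z_def Hm_def sum_distrib_left mult.assoc)
    also have "\<dots> = 0" using Bw by simp
    finally have q: "QF {..<n} (Hm Sh) z = 0" .
    have "kerV {..<n} (Hm Sh) z"
      unfolding kerV_def using psd_null[OF _ psd_bridge[OF psdh] q] by simp
    then have allz: "\<forall>j<n. z j = 0" using kp zm by (simp add: m_def)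
    have wi: "w $ i = 0" if "i < m" for i
    proof -
      have "z i = 0" using allz that nm by simp
      then show ?thesis using that by (simp add: z_def)
    qed
    have "w = 0\<^sub>v m" using w(1) wi by (intro eq_vecI) auto
    then show False using w(2) by simp
  qed
  then have "card {j. j < n \<and> j \<in> I} \<le> vec_space.rank n Sh"
    unfolding B_def by (rule vec_space.rank_gt_minor[OF carh])
  then show ?thesis using cI by (simp add: m_def)
qed


lemma rank_upper:
  fixes S :: "complex mat"
  assumes car: "S \<in> carrier_mat n n" and psdS: "psd_mat n S"
    and kp: "\<And>z. kerV {..<n} (Hm S) z \<Longrightarrow> z (n - 1) = 0 \<Longrightarrow> \<forall>j<n. z j = 0"
    and n0: "0 < n"
  shows "\<exists>Sh. Sh \<in> carrier_mat n n \<and> psd_mat n Sh \<and> diagonal_mat (S - Sh) \<and> vec_space.rank n Sh < n"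
proof -
  define m where "m = n - 1"
  have nm: "n = Suc m" using n0 by (simp add: m_def)
  have mn: "m < n" using nm by simp
  have herm: "\<forall>i<n. \<forall>j<n. S $$ (i, j) = cnj (S $$ (j, i))"
    using psdS unfolding psd_mat_def hermitian_mat_def by blast
  define M where "M = mat\<^sub>r n n (\<lambda>i. if i = m then 0\<^sub>v n else row S i)"
  have cM: "M \<in> carrier_mat n n" unfolding M_def by (rule mat_row_carrierI)
  have "det M = 0" unfolding M_def
  proof (rule det_row_0[OF mn, of "\<lambda>i. row S i"])
    show "(\<lambda>i. row S i) \<in> {0..<n} \<rightarrow> carrier_vec n"
    proof
      fix i assume "i \<in> {0..<n}"
      show "row S i \<in> carrier_vec n" using car by (intro carrier_vecI) simp
    qed
  qed
  then obtain w where w: "w \<in> carrier_vec n" "w \<noteq> 0\<^sub>v n" "M *\<^sub>v w = 0\<^sub>v n"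
    using det_0_iff_vec_prod_zero_field[OF cM] by blast
  have SW: "(\<Sum>j<n. S $$ (i, j) * w $ j) = 0" if i: "i < n" "i \<noteq> m" for i
  proof -
    have "(M *\<^sub>v w) $ i = 0" using w(3) i by simp
    moreover have "(M *\<^sub>v w) $ i = (\<Sum>j<n. M $$ (i, j) * w $ j)" by (rule mult_vec_sum[OF cM w(1) i(1)])
    moreover have "M $$ (i, j) = S $$ (i, j)" if "j < n" for j
      unfolding M_def using i that car by simp
    ultimately show ?thesis by simp
  qed
  define z where "z j = w $ j" for j
  define s where "s = (\<Sum>j<n. S $$ (m, j) * w $ j)"
  have QFz: "QF {..<n} (Hm S) z = cnj (w $ m) * s"
  proof -
    have "QF {..<n} (Hm S) z = (\<Sum>i<n. cnj (w $ i) * (\<Sum>j<n. S $$ (i, j) * w $ j))"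
      unfolding QF_def by (intro sum.cong refl) (simp add: z_def Hm_def sum_distrib_left mult.assoc)
    also have "\<dots> = (\<Sum>i<m. cnj (w $ i) * (\<Sum>j<n. S $$ (i, j) * w $ j)) + cnj (w $ m) * s"
      unfolding nm by (simp add: s_def nm)
    also have "(\<Sum>i<m. cnj (w $ i) * (\<Sum>j<n. S $$ (i, j) * w $ j)) = 0"
      using SW mn by simp
    finally show ?thesis by simp
  qed
  have wm: "w $ m \<noteq> 0"
  proof
    assume wm0: "w $ m = 0"
    then have q: "QF {..<n} (Hm S) z = 0" using QFz by simp
    have kz: "kerV {..<n} (Hm S) z"
      unfolding kerV_def using psd_null[OF _ psd_bridge[OF psdS] q] by simp
    have "z (n - 1) = 0" using wm0 by (simp add: z_def m_def)
    then have allz: "\<forall>j<n. z j = 0" by (rule kp[OF kz])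
    have "w = 0\<^sub>v n" using w(1) allz by (intro eq_vecI) (auto simp: z_def)
    then show False using w(2) by simp
  qed
  define c where "c = s / w $ m"
  have sc: "s = c * w $ m" using wm by (simp add: c_def)
  have cR: "c \<in> \<real>"
  proof -
    have "QF {..<n} (Hm S) z = c * (w $ m * cnj (w $ m))" using QFz sc by (simp add: algebra_simps)
    also have "\<dots> = c * of_real ((cmod (w $ m))\<^sup>2)" by (simp only: complex_norm_square)
    finally have e: "c = QF {..<n} (Hm S) z / of_real ((cmod (w $ m))\<^sup>2)" using wm by simp
    show ?thesis unfolding e by (intro Reals_divide psd_real[OF psdS]) simp
  qed
  define Sh where "Sh = mat n n (\<lambda>(i, j). if i = m \<and> j = m then S $$ (m, m) - c else S $$ (i, j))"
  have cSh: "Sh \<in> carrier_mat n n" by (simp add: Sh_def)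
  have Shij: "Sh $$ (i, j) = (if i = m \<and> j = m then S $$ (m, m) - c else S $$ (i, j))" if "i < n" "j < n" for i j
    using that by (simp add: Sh_def)
  have diag: "diagonal_mat (S - Sh)"
    unfolding diagonal_mat_def using car cSh Shij by auto
  have Shw: "Sh *\<^sub>v w = 0\<^sub>v n"
  proof (rule eq_vecI)
    show "dim_vec (Sh *\<^sub>v w) = dim_vec (0\<^sub>v n)" using cSh by simp
    fix i assume "i < dim_vec (0\<^sub>v n)"
    then have i: "i < n" by simp
    have e: "(Sh *\<^sub>v w) $ i = (\<Sum>j<n. Sh $$ (i, j) * w $ j)" by (rule mult_vec_sum[OF cSh w(1) i])
    show "(Sh *\<^sub>v w) $ i = 0\<^sub>v n $ i"
    proof (cases "i = m")
      case True
      have "(\<Sum>j<n. Sh $$ (i, j) * w $ j) = (\<Sum>j<n. S $$ (m, j) * w $ j - (if j = m then c * w $ j else 0))"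
      proof (rule sum.cong)
        fix j assume "j \<in> {..<n}"
        then show "Sh $$ (i, j) * w $ j = S $$ (m, j) * w $ j - (if j = m then c * w $ j else 0)"
          using Shij[of m j] mn True by (auto simp: algebra_simps)
      qed simp
      also have "\<dots> = s - c * w $ m" unfolding sum_subtractf using mn by (simp add: s_def)
      also have "\<dots> = 0" using sc by simp
      finally show ?thesis using e i by simp
    next
      case False
      have "(\<Sum>j<n. Sh $$ (i, j) * w $ j) = (\<Sum>j<n. S $$ (i, j) * w $ j)"
        by (intro sum.cong refl) (simp add: Shij i False)
      then show ?thesis using e i SW[OF i False] by simp
    qed
  qed
  have "det Sh = 0" using det_0_iff_vec_prod_zero_field[OF cSh] w Shw by blast
  then have rk: "vec_space.rank n Sh < n" by (rule vec_space.det_zero_low_rank[OF cSh])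
  have hermSh: "\<forall>i<n. \<forall>j<n. Sh $$ (i, j) = cnj (Sh $$ (j, i))"
  proof (intro allI impI)
    fix i j assume i: "i < n" and j: "j < n"
    show "Sh $$ (i, j) = cnj (Sh $$ (j, i))"
    proof (cases "i = m \<and> j = m")
      case True
      have "S $$ (m, m) = cnj (S $$ (m, m))" using herm mn by blast
      moreover have "cnj c = c" using cR by (simp add: Reals_cnj_iff)
      ultimately show ?thesis using True i j Shij by (metis complex_cnj_diff)
    next
      case False
      then have "\<not> (j = m \<and> i = m)" by blast
      then have e1: "Sh $$ (i, j) = S $$ (i, j)" "Sh $$ (j, i) = S $$ (j, i)"
        using Shij[OF i j] Shij[OF j i] False by auto
      have "S $$ (i, j) = cnj (S $$ (j, i))" using herm i j by blast
      then show ?thesis unfolding e1 .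
    qed
  qed
  have kerSh: "kerV {..<n} (Hm Sh) z"
    unfolding kerV_def
  proof
    fix i assume "i \<in> {..<n}"
    then have i: "i < n" by simp
    have "(Sh *\<^sub>v w) $ i = 0" using Shw i by simp
    then show "(\<Sum>j\<in>{..<n}. Hm Sh i j * z j) = 0"
      using mult_vec_sum[OF cSh w(1) i] by (simp add: Hm_def z_def)
  qed
  have hermV: "\<forall>i\<in>{..<n}. \<forall>j\<in>{..<n}. Hm Sh i j = cnj (Hm Sh j i)"
    using hermSh unfolding Hm_def lessThan_iff by blast
  have QFx: "QF {..<n} (Hm Sh) x = QF {..<n} (Hm S) (\<lambda>j. x j - (x m / w $ m) * z j)" for x
  proof -
    define t where "t = x m / w $ m"
    define u where "u j = x j - t * z j" for j
    have um: "u m = 0" using wm by (simp add: u_def t_def z_def)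
    have xu: "x = (\<lambda>j. u j + t * z j)" by (simp add: u_def)
    have "QF {..<n} (Hm Sh) x = QF {..<n} (Hm Sh) u"
      unfolding xu by (rule QF_shift[OF hermV kerSh])
    also have "\<dots> = QF {..<n} (Hm S) u"
      unfolding QF_def
    proof (intro sum.cong refl)
      fix i j assume "i \<in> {..<n}" "j \<in> {..<n}"
      then show "cnj (u i) * Hm Sh i j * u j = cnj (u i) * Hm S i j * u j"
        using Shij[of i j] um by (cases "i = m \<and> j = m") (auto simp: Hm_def)
    qed
    also have "u = (\<lambda>j. x j - (x m / w $ m) * z j)" by (rule ext) (simp add: u_def t_def)
    finally show ?thesis .
  qed
  have psdSh: "psd_mat n Sh"
  proof -
    have q: "(\<Sum>i<n. \<Sum>j<n. cnj (x i) * Sh $$ (i, j) * x j) \<in> \<real> \<and>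
            0 \<le> Re (\<Sum>i<n. \<Sum>j<n. cnj (x i) * Sh $$ (i, j) * x j)" for x :: "nat \<Rightarrow> complex"
    proof -
      have e: "(\<Sum>i<n. \<Sum>j<n. cnj (x i) * Sh $$ (i, j) * x j) = QF {..<n} (Hm Sh) x"
        by (simp add: QF_def Hm_def)
      show ?thesis unfolding e QFx using psd_real[OF psdS] psd_QF[OF psd_bridge[OF psdS]] by blast
    qed
    show ?thesis unfolding psd_mat_def hermitian_mat_def using cSh hermSh q by blast
  qed
  show ?thesis using cSh psdSh diag rk by blast
qed


lemma diag_self: "A \<in> carrier_mat n n \<Longrightarrow> diagonal_mat (A - (A :: complex mat))"
  by (auto simp: diagonal_mat_def)

theorem theorem4:
  fixes n :: nat and \<Sigma> :: "complex mat"
  assumes "\<Sigma> \<in> carrier_mat n n"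
    and "psd_mat n \<Sigma>"
    and "irreducible_mat n \<Sigma>"
    and "\<forall>i<n. \<forall>j<n. i \<noteq> j \<and> \<Sigma> $$ (i, j) \<noteq> 0 \<longrightarrow>
           - (pi / 2 ^ n) < Arg (- \<Sigma> $$ (i, j)) \<and> Arg (- \<Sigma> $$ (i, j)) < pi / 2 ^ n"
  shows "mr n \<Sigma> = n - 1"
proof -
  note car = assms(1) and psdS = assms(2)
  define R where "R = {vec_space.rank n Sh | Sh. Sh \<in> carrier_mat n n \<and> psd_mat n Sh \<and> diagonal_mat (\<Sigma> - Sh)}"
  have kp: "\<forall>j<n. z j = 0" if "Sh \<in> carrier_mat n n" "psd_mat n Sh" "diagonal_mat (\<Sigma> - Sh)"
      "kerV {..<n} (Hm Sh) z" "z (n - 1) = 0" "0 < n" for Sh z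
  proof (rule kern_prop[OF assms that(1-4), where k = "n - 1"])
    show "n - 1 < n" using that(6) by simp
    show "z (n - 1) = 0" by (rule that(5))
  qed
  have fin: "finite R"
  proof (rule finite_subset)
    show "R \<subseteq> {..n}"
    proof
      fix y assume "y \<in> R"
      then obtain Sh :: "complex mat" where y: "y = vec_space.rank n Sh" and "Sh \<in> carrier_mat n n" unfolding R_def by blast
      then have "y \<le> n" using vec_space.rank_le_nc by blast
      then show "y \<in> {..n}" by simp
    qed
  qed simp
  have low: "n - 1 \<le> y" if "y \<in> R" for y
  proof (cases "n = 0")
    case True then show ?thesis by simp
  next
    case False
    from that obtain Sh where y: "y = vec_space.rank n Sh" and Sh: "Sh \<in> carrier_mat n n" "psd_mat n Sh"
      "diagonal_mat (\<Sigma> - Sh)" unfolding R_def by blast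
    show ?thesis unfolding y
      by (rule rank_lower[OF Sh(1,2)]) (use kp[OF Sh] False in auto)
  qed
  have mem: "n - 1 \<in> R"
  proof (cases "n = 0")
    case True
    have "vec_space.rank n \<Sigma> \<le> 0" using vec_space.rank_le_nc[OF car] True by simp
    then have "vec_space.rank n \<Sigma> = n - 1" using True by simp
    then show ?thesis unfolding R_def
      by (intro CollectI exI[of _ \<Sigma>] conjI) (use car psdS diag_self[OF car] in auto)
  next
    case False
    obtain Sh where Sh: "Sh \<in> carrier_mat n n" "psd_mat n Sh" "diagonal_mat (\<Sigma> - Sh)"
      and rk: "vec_space.rank n Sh < n"
      using rank_upper[OF car psdS] kp[OF car psdS diag_self[OF car]] False by blast
    have "vec_space.rank n Sh \<in> R" unfolding R_def using Sh by blast
    moreover have "n - 1 \<le> vec_space.rank n Sh" using low calculation by blast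
    ultimately show ?thesis using rk by (metis Suc_pred' False gr0I le_antisym less_Suc_eq_le)
  qed
  show ?thesis unfolding mr_def R_def[symmetric] by (rule Min_eqI[OF fin low mem])
qed

end
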